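(* $\operatorname{BSR}(5,3)\ge 9$. In particular, the biquadratic form \[P(\mathbf{x},\mathbf{y})=x_1^2y_1^2+x_1^2y_2^2+x_2^2y_1^2+x_2^2y_3^2+x_3^2y_2^2+x_3^2y_3^2+x_4^2y_1^2+x_5^2y_2^2+(x_1y_3+x_4y_2)^2\] on $\mathbb{R}^5\times\mathbb{R}^3$ has SOS rank $9$ (i.e., it cannot be written as a sum of fewer than 9 squares of bilinear forms).
   Context: An $m\times n$ biquadratic form is a polynomial $P(\mathbf{x},\mathbf{y})=\sum_{i,k=1}^m\sum_{j,l=1}^n a_{ijkl}x_ix_ky_jy_l$ with real coefficients, $\mathbf{x}\in\mathbb{R}^m$, $\mathbf{y}\in\mathbb{R}^n$. It is SOS if $P=\sum_{p=1}^r f_p^2$ for some real bilinear forms $f_p(\mathbf{x},\mathbf{y})=\sum_{i,j}c^{(p)}_{ij}x_iy_j$; the least such $r$ is the SOS rank $\operatorname{sos}(P)$. $\operatorname{BSR}(m,n)$ is the maximum of $\operatorname{sos}(P)$ over all $m\times n$ SOS biquadratic forms $P$. *)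

theory Defs
  imports Complex_Main "HOL-Library.Extended_Nat"
begin

(* Vectors x in R^m, y in R^n are functions nat => real; only the
   coordinates 0..m-1 (resp. 0..n-1) are used (0-based indexing). *)

definition biquad_eval ::
  "nat \<Rightarrow> nat \<Rightarrow> (nat \<Rightarrow> nat \<Rightarrow> nat \<Rightarrow> nat \<Rightarrow> real) \<Rightarrow> (nat \<Rightarrow> real) \<Rightarrow> (nat \<Rightarrow> real) \<Rightarrow> real" where
  "biquad_eval m n a x y =
     (\<Sum>i<m. \<Sum>k<m. \<Sum>j<n. \<Sum>l<n. a i j k l * x i * x k * y j * y l)"

definition is_biquadratic ::
  "nat \<Rightarrow> nat \<Rightarrow> ((nat \<Rightarrow> real) \<Rightarrow> (nat \<Rightarrow> real) \<Rightarrow> real) \<Rightarrow> bool" where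
  "is_biquadratic m n P \<longleftrightarrow> (\<exists>a. \<forall>x y. P x y = biquad_eval m n a x y)"

definition bilin_eval ::
  "nat \<Rightarrow> nat \<Rightarrow> (nat \<Rightarrow> nat \<Rightarrow> real) \<Rightarrow> (nat \<Rightarrow> real) \<Rightarrow> (nat \<Rightarrow> real) \<Rightarrow> real" where
  "bilin_eval m n c x y = (\<Sum>i<m. \<Sum>j<n. c i j * x i * y j)"

definition sos_repr ::
  "nat \<Rightarrow> nat \<Rightarrow> ((nat \<Rightarrow> real) \<Rightarrow> (nat \<Rightarrow> real) \<Rightarrow> real) \<Rightarrow> nat \<Rightarrow> bool" where
  "sos_repr m n P r \<longleftrightarrow>
     (\<exists>cs :: nat \<Rightarrow> nat \<Rightarrow> nat \<Rightarrow> real.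
        \<forall>x y. P x y = (\<Sum>p<r. (bilin_eval m n (cs p) x y)^2))"

definition is_sos ::
  "nat \<Rightarrow> nat \<Rightarrow> ((nat \<Rightarrow> real) \<Rightarrow> (nat \<Rightarrow> real) \<Rightarrow> real) \<Rightarrow> bool" where
  "is_sos m n P \<longleftrightarrow> (\<exists>r. sos_repr m n P r)"

definition sos_rank ::
  "nat \<Rightarrow> nat \<Rightarrow> ((nat \<Rightarrow> real) \<Rightarrow> (nat \<Rightarrow> real) \<Rightarrow> real) \<Rightarrow> nat" where
  "sos_rank m n P = (LEAST r. sos_repr m n P r)"

definition BSR :: "nat \<Rightarrow> nat \<Rightarrow> enat" where
  "BSR m n = (SUP P \<in> {P. is_biquadratic m n P \<and> is_sos m n P}. enat (sos_rank m n P))"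

end

theory Submission
  imports Defs
begin


definition ev :: "nat \<Rightarrow> nat \<Rightarrow> real" where "ev i t = (if t = i then 1 else 0)"

lemma bilin_alt: "bilin_eval m n c x y = (\<Sum>i<m. x i * (\<Sum>j<n. c i j * y j))"
  unfolding bilin_eval_def by (simp add: sum_distrib_left algebra_simps)

lemma ev_sum: "a < m \<Longrightarrow> (\<Sum>t<m. ev a t * g t) = g a"
proof -
  assume "a < m"
  have "(\<Sum>t<m. ev a t * g t) = (\<Sum>t<m. if t = a then g t else 0)"
    by (rule sum.cong) (auto simp: ev_def)
  then show ?thesis using \<open>a < m\<close> by simp
qed

lemma sum_ev2: "i < m \<Longrightarrow> k < m \<Longrightarrow>
  (\<Sum>t<m. (ev i t + s * ev k t) * g t) = g i + s * g k"
  by (simp add: distrib_right sum.distrib mult.assoc sum_distrib_left[symmetric] ev_sum)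

lemma bilin_ev: "i < m \<Longrightarrow> k < m \<Longrightarrow> j < n \<Longrightarrow> l < n \<Longrightarrow>
  bilin_eval m n c (\<lambda>t. ev i t + s * ev k t) (\<lambda>t. ev j t + s' * ev l t)
   = c i j + s' * c i l + s * c k j + s * s' * c k l"
proof -
  assume a: "i < m" "k < m" "j < n" "l < n"
  have "bilin_eval m n c (\<lambda>t. ev i t + s * ev k t) (\<lambda>t. ev j t + s' * ev l t)
     = (\<Sum>t<m. (ev i t + s * ev k t) * (\<Sum>u<n. (ev j u + s' * ev l u) * c t u))"
    unfolding bilin_alt by (simp add: mult.commute)
  also have "\<dots> = (\<Sum>u<n. (ev j u + s' * ev l u) * c i u) + s * (\<Sum>u<n. (ev j u + s' * ev l u) * c k u)"
    using a by (simp only: sum_ev2)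
  also have "\<dots> = c i j + s' * c i l + s * c k j + s * s' * c k l"
    using a by (simp only: sum_ev2) (simp add: algebra_simps)
  finally show ?thesis .
qed

lemma Qlemma:
  assumes F: "\<And>x y. F x y = (\<Sum>p<r. (bilin_eval m n (cs p) x y)^2)"
    and a: "i < m" "k < m" "j < n" "l < n"
  shows "(\<Sum>p<r. cs p i j * cs p k l + cs p i l * cs p k j) =
    (F (\<lambda>t. ev i t + 1 * ev k t) (\<lambda>t. ev j t + 1 * ev l t)
   - F (\<lambda>t. ev i t + (-1) * ev k t) (\<lambda>t. ev j t + 1 * ev l t)
   - F (\<lambda>t. ev i t + 1 * ev k t) (\<lambda>t. ev j t + (-1) * ev l t)
   + F (\<lambda>t. ev i t + (-1) * ev k t) (\<lambda>t. ev j t + (-1) * ev l t)) / 8"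
  unfolding F bilin_ev[OF a]
  apply (simp add: sum_subtractf[symmetric] sum.distrib[symmetric] sum_divide_distrib power2_eq_square algebra_simps)
  apply (rule sum.cong) apply auto
  done



lemma bessel:
  fixes V :: "nat \<Rightarrow> nat \<Rightarrow> real"
  assumes orth: "\<And>k k'. k < N \<Longrightarrow> k' < N \<Longrightarrow> (\<Sum>p<r. V k p * V k' p) = (if k = k' then 1 else 0)"
  shows "N \<le> r"
proof -
  have each: "(\<Sum>k<N. (V k q)^2) \<le> 1" if q: "q < r" for q
  proof -
    define s where "s t = (\<Sum>k<N. V k q * V k t)" for t
    have s2: "(\<Sum>t<r. (s t)^2) = (\<Sum>k<N. (V k q)^2)"
    proof -
      have "(\<Sum>t<r. (s t)^2) = (\<Sum>t<r. \<Sum>k<N. \<Sum>k'<N. V k q * V k' q * (V k t * V k' t))"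
        unfolding s_def power2_eq_square sum_product by (simp add: algebra_simps)
      also have "\<dots> = (\<Sum>k<N. \<Sum>k'<N. V k q * V k' q * (\<Sum>t<r. V k t * V k' t))"
        by (simp add: sum_distrib_left sum.swap[of _ "{..<r}"])
      also have "\<dots> = (\<Sum>k<N. \<Sum>k'<N. V k q * V k' q * (if k = k' then 1 else 0))"
        by (intro sum.cong refl) (simp add: orth)
      also have "\<dots> = (\<Sum>k<N. (V k q)^2)"
        by (simp add: power2_eq_square if_distrib cong: if_cong)
      finally show ?thesis .
    qed
    have s1: "(\<Sum>t<r. ev q t * s t) = (\<Sum>k<N. (V k q)^2)"
      using q by (simp add: ev_sum s_def power2_eq_square)
    have e1: "(\<Sum>t<r. (ev q t)^2) = 1"
      using ev_sum[OF q, of "ev q"] by (simp add: power2_eq_square ev_def)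
    have "0 \<le> (\<Sum>t<r. (ev q t - s t)^2)" by (simp add: sum_nonneg)
    also have "\<dots> = (\<Sum>t<r. (ev q t)^2) - 2 * (\<Sum>t<r. ev q t * s t) + (\<Sum>t<r. (s t)^2)"
      by (simp add: power2_diff sum.distrib sum_subtractf sum_distrib_left algebra_simps)
    finally show ?thesis using s1 s2 e1 by simp
  qed
  have "real N = (\<Sum>k<N. \<Sum>p<r. (V k p)^2)"
    by (simp add: orth power2_eq_square)
  also have "\<dots> = (\<Sum>p<r. \<Sum>k<N. (V k p)^2)" by (rule sum.swap)
  also have "\<dots> \<le> (\<Sum>p<r. 1)" by (rule sum_mono) (simp add: each)
  finally show ?thesis by simp
qed

lemma sos_biquad:
  assumes "\<And>x y. P x y = (\<Sum>p<r. (bilin_eval m n (cs p) x y)^2)"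
  shows "is_biquadratic m n P"
  unfolding is_biquadratic_def
proof (intro exI allI)
  fix x y
  show "P x y = biquad_eval m n (\<lambda>i j k l. \<Sum>p<r. cs p i j * cs p k l) x y"
    unfolding assms biquad_eval_def bilin_eval_def power2_eq_square
    apply (simp add: sum_product sum_distrib_left sum_distrib_right algebra_simps
        sum.swap[of _ "{..<r}"] sum.swap[of _ "{..<n}" "{..<m}"])
    apply (rule sum.cong[OF refl])
    apply (rule sum.cong[OF refl])
    apply (rule sum.cong[OF refl])
    apply (rule trans[OF sum.swap])
    apply (intro sum.cong refl)
    apply (simp add: mult_ac)
    done
qed

lemma bil53: "bilin_eval 5 3 c x y = c 0 0 * x 0 * y 0 + c 0 1 * x 0 * y 1 + c 0 2 * x 0 * y 2
  + c 1 0 * x 1 * y 0 + c 1 1 * x 1 * y 1 + c 1 2 * x 1 * y 2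
  + c 2 0 * x 2 * y 0 + c 2 1 * x 2 * y 1 + c 2 2 * x 2 * y 2
  + c 3 0 * x 3 * y 0 + c 3 1 * x 3 * y 1 + c 3 2 * x 3 * y 2
  + c 4 0 * x 4 * y 0 + c 4 1 * x 4 * y 1 + c 4 2 * x 4 * y 2"
  by (simp add: bilin_eval_def numeral_eq_Suc lessThan_Suc algebra_simps)

lemma sum_comm: "(\<Sum>p<r. (c p :: real) * d p) = (\<Sum>p<r. d p * c p)"
  by (simp add: mult.commute)

theorem corollary4p2:
  fixes P :: "(nat \<Rightarrow> real) \<Rightarrow> (nat \<Rightarrow> real) \<Rightarrow> real"
  defines "P \<equiv> (\<lambda>x y.
      (x 0)^2 * (y 0)^2 + (x 0)^2 * (y 1)^2 + (x 1)^2 * (y 0)^2 + (x 1)^2 * (y 2)^2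
    + (x 2)^2 * (y 1)^2 + (x 2)^2 * (y 2)^2 + (x 3)^2 * (y 0)^2 + (x 4)^2 * (y 1)^2
    + (x 0 * y 2 + x 3 * y 1)^2)"
  shows "BSR 5 3 \<ge> 9 \<and> is_biquadratic 5 3 P \<and> is_sos 5 3 P \<and> sos_rank 5 3 P = 9"
proof -
  define L8 :: "(nat \<times> nat) list" where "L8 = [(0,0),(0,1),(1,0),(1,2),(2,1),(2,2),(3,0),(4,1)]"
  define cs0 :: "nat \<Rightarrow> nat \<Rightarrow> nat \<Rightarrow> real" where
    "cs0 p i j = (if p < 8 then (if (i,j) = L8 ! p then 1 else 0)
                  else (if (i,j) = (0,2) \<or> (i,j) = (3,1) then 1 else 0))" for p i j
  have rep9: "\<And>x y. P x y = (\<Sum>p<9. (bilin_eval 5 3 (cs0 p) x y)^2)"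
    unfolding bil53 by (simp add: cs0_def L8_def P_def lessThan_nat_numeral power2_eq_square algebra_simps)
  have s9: "sos_repr 5 3 P 9" unfolding sos_repr_def using rep9 by blast
  have lower: "9 \<le> r" if sr: "sos_repr 5 3 P r" for r
  proof -
    from sr obtain cs where F: "\<And>x y. P x y = (\<Sum>p<r. (bilin_eval 5 3 (cs p) x y)^2)"
      unfolding sos_repr_def by blast
    have Q2: "(\<Sum>p<r. cs p i j * cs p k l) + (\<Sum>p<r. cs p i l * cs p k j) =
    (P (\<lambda>t. ev i t + 1 * ev k t) (\<lambda>t. ev j t + 1 * ev l t)
   - P (\<lambda>t. ev i t + (-1) * ev k t) (\<lambda>t. ev j t + 1 * ev l t)
   - P (\<lambda>t. ev i t + 1 * ev k t) (\<lambda>t. ev j t + (-1) * ev l t)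
   + P (\<lambda>t. ev i t + (-1) * ev k t) (\<lambda>t. ev j t + (-1) * ev l t)) / 8"
      if "i < 5" "k < 5" "j < 3" "l < 3" for i k j l
      using Qlemma[OF F that] by (simp add: sum.distrib)
    have z11: "\<And>p. p < r \<Longrightarrow> cs p (Suc 0) (Suc 0) = 0"
    proof -
      have "(\<Sum>p<r. cs p (Suc 0) (Suc 0) * cs p (Suc 0) (Suc 0)) = 0"
        using Q2[of 1 1 1 1] by (simp add: P_def ev_def)
      then have "\<forall>p\<in>{..<r}. (cs p (Suc 0) (Suc 0))^2 = 0"
        by (subst sum_nonneg_eq_0_iff[symmetric]) (auto simp: power2_eq_square)
      then show "\<And>p. p < r \<Longrightarrow> cs p (Suc 0) (Suc 0) = 0" by simp
    qed
    have zl11: "\<And>f. (\<Sum>p<r. cs p (Suc 0) (Suc 0) * f p) = 0" "\<And>f. (\<Sum>p<r. f p * cs p (Suc 0) (Suc 0)) = 0"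
      using z11 by (auto intro!: sum.neutral)
    have z20: "\<And>p. p < r \<Longrightarrow> cs p 2 0 = 0"
    proof -
      have "(\<Sum>p<r. cs p 2 0 * cs p 2 0) = 0"
        using Q2[of 2 2 0 0] by (simp add: P_def ev_def)
      then have "\<forall>p\<in>{..<r}. (cs p 2 0)^2 = 0"
        by (subst sum_nonneg_eq_0_iff[symmetric]) (auto simp: power2_eq_square)
      then show "\<And>p. p < r \<Longrightarrow> cs p 2 0 = 0" by simp
    qed
    have zl20: "\<And>f. (\<Sum>p<r. cs p 2 0 * f p) = 0" "\<And>f. (\<Sum>p<r. f p * cs p 2 0) = 0"
      using z20 by (auto intro!: sum.neutral)
    have z32: "\<And>p. p < r \<Longrightarrow> cs p 3 2 = 0"
    proof -
      have "(\<Sum>p<r. cs p 3 2 * cs p 3 2) = 0"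
        using Q2[of 3 3 2 2] by (simp add: P_def ev_def)
      then have "\<forall>p\<in>{..<r}. (cs p 3 2)^2 = 0"
        by (subst sum_nonneg_eq_0_iff[symmetric]) (auto simp: power2_eq_square)
      then show "\<And>p. p < r \<Longrightarrow> cs p 3 2 = 0" by simp
    qed
    have zl32: "\<And>f. (\<Sum>p<r. cs p 3 2 * f p) = 0" "\<And>f. (\<Sum>p<r. f p * cs p 3 2) = 0"
      using z32 by (auto intro!: sum.neutral)
    have z40: "\<And>p. p < r \<Longrightarrow> cs p 4 0 = 0"
    proof -
      have "(\<Sum>p<r. cs p 4 0 * cs p 4 0) = 0"
        using Q2[of 4 4 0 0] by (simp add: P_def ev_def)
      then have "\<forall>p\<in>{..<r}. (cs p 4 0)^2 = 0"
        by (subst sum_nonneg_eq_0_iff[symmetric]) (auto simp: power2_eq_square)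
      then show "\<And>p. p < r \<Longrightarrow> cs p 4 0 = 0" by simp
    qed
    have zl40: "\<And>f. (\<Sum>p<r. cs p 4 0 * f p) = 0" "\<And>f. (\<Sum>p<r. f p * cs p 4 0) = 0"
      using z40 by (auto intro!: sum.neutral)
    have z42: "\<And>p. p < r \<Longrightarrow> cs p 4 2 = 0"
    proof -
      have "(\<Sum>p<r. cs p 4 2 * cs p 4 2) = 0"
        using Q2[of 4 4 2 2] by (simp add: P_def ev_def)
      then have "\<forall>p\<in>{..<r}. (cs p 4 2)^2 = 0"
        by (subst sum_nonneg_eq_0_iff[symmetric]) (auto simp: power2_eq_square)
      then show "\<And>p. p < r \<Longrightarrow> cs p 4 2 = 0" by simp
    qed
    have zl42: "\<And>f. (\<Sum>p<r. cs p 4 2 * f p) = 0" "\<And>f. (\<Sum>p<r. f p * cs p 4 2) = 0"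
      using z42 by (auto intro!: sum.neutral)
    note zeros = zl11 zl20 zl32 zl40 zl42
    have n31: "(\<Sum>p<r. cs p 3 (Suc 0) * cs p 3 (Suc 0)) = 1"
      using Q2[of 3 3 1 1] by (simp add: P_def ev_def)
    have n02: "(\<Sum>p<r. cs p 0 2 * cs p 0 2) = 1"
      using Q2[of 0 0 2 2] by (simp add: P_def ev_def)
    have c0231: "(\<Sum>p<r. cs p 0 2 * cs p 3 (Suc 0)) = 1"
      using Q2[of 0 3 2 1] by (simp add: P_def ev_def zeros sum_comm)
    have "(\<Sum>p<r. (cs p 0 2 - cs p 3 (Suc 0))^2) =
       (\<Sum>p<r. cs p 0 2 * cs p 0 2) - 2 * (\<Sum>p<r. cs p 0 2 * cs p 3 (Suc 0)) + (\<Sum>p<r. cs p 3 (Suc 0) * cs p 3 (Suc 0))"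
      by (simp add: power2_diff power2_eq_square sum.distrib sum_subtractf sum_distrib_left algebra_simps)
    also have "\<dots> = 0" by (simp only: n31 n02 c0231)
    finally have "\<forall>p\<in>{..<r}. (cs p 0 2 - cs p 3 (Suc 0))^2 = 0"
      by (subst sum_nonneg_eq_0_iff[symmetric]) auto
    then have eq: "\<And>p. p < r \<Longrightarrow> cs p 0 2 = cs p 3 (Suc 0)" by simp
    have sp1: "(\<Sum>p<r. cs p 0 2 * cs p (Suc 0) 0) = 0"
    proof -
      have "(\<Sum>p<r. cs p 0 2 * cs p (Suc 0) 0) = (\<Sum>p<r. cs p 3 (Suc 0) * cs p (Suc 0) 0)"
        by (rule sum.cong) (simp_all add: eq)
      also have "\<dots> = 0" using Q2[of 3 1 1 0] by (simp add: P_def ev_def zeros sum_comm)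
      finally show ?thesis .
    qed
    have sp2: "(\<Sum>p<r. cs p 0 2 * cs p 2 (Suc 0)) = 0"
    proof -
      have "(\<Sum>p<r. cs p 0 2 * cs p 2 (Suc 0)) = (\<Sum>p<r. cs p 3 (Suc 0) * cs p 2 (Suc 0))"
        by (rule sum.cong) (simp_all add: eq)
      also have "\<dots> = 0" using Q2[of 3 2 1 1] by (simp add: P_def ev_def zeros sum_comm)
      finally show ?thesis .
    qed
    have sp3: "(\<Sum>p<r. cs p 0 0 * cs p 3 (Suc 0)) = 0"
    proof -
      have "(\<Sum>p<r. cs p 0 0 * cs p 3 (Suc 0)) = (\<Sum>p<r. cs p 0 0 * cs p 0 2)"
        by (rule sum.cong) (simp_all add: eq)
      also have "\<dots> = 0" using Q2[of 0 0 0 2] by (simp add: P_def ev_def zeros sum_comm)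
      finally show ?thesis .
    qed
    have sps: "(\<Sum>p<r. cs p (Suc 0) 0 * cs p 0 2) = 0" "(\<Sum>p<r. cs p 2 (Suc 0) * cs p 0 2) = 0"
       "(\<Sum>p<r. cs p 3 (Suc 0) * cs p 0 0) = 0"
      by (subst sum_comm; simp add: sp1 sp2 sp3)+
    have o00: "(\<Sum>p<r. cs p 0 0 * cs p 0 0) = 1"
      using Q2[of 0 0 0 0] by (simp add: P_def ev_def zeros sp1 sp2 sp3 sps sum_comm)
    have o01: "(\<Sum>p<r. cs p 0 0 * cs p 0 (Suc 0)) = 0"
      using Q2[of 0 0 0 1] by (simp add: P_def ev_def zeros sp1 sp2 sp3 sps sum_comm)
    have o02: "(\<Sum>p<r. cs p 0 0 * cs p 0 2) = 0"
      using Q2[of 0 0 0 2] by (simp add: P_def ev_def zeros sp1 sp2 sp3 sps sum_comm)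
    have o03: "(\<Sum>p<r. cs p 0 0 * cs p (Suc 0) 0) = 0"
      using Q2[of 0 1 0 0] by (simp add: P_def ev_def zeros sp1 sp2 sp3 sps sum_comm)
    have o04: "(\<Sum>p<r. cs p 0 0 * cs p (Suc 0) 2) = 0"
      using Q2[of 0 1 0 2] by (simp add: P_def ev_def zeros sp1 sp2 sp3 sps sum_comm)
    have o05: "(\<Sum>p<r. cs p 0 0 * cs p 2 (Suc 0)) = 0"
      using Q2[of 0 2 0 1] by (simp add: P_def ev_def zeros sp1 sp2 sp3 sps sum_comm)
    have o06: "(\<Sum>p<r. cs p 0 0 * cs p 2 2) = 0"
      using Q2[of 0 2 0 2] by (simp add: P_def ev_def zeros sp1 sp2 sp3 sps sum_comm)
    have o07: "(\<Sum>p<r. cs p 0 0 * cs p 3 0) = 0"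
      using Q2[of 0 3 0 0] by (simp add: P_def ev_def zeros sp1 sp2 sp3 sps sum_comm)
    have o08: "(\<Sum>p<r. cs p 0 0 * cs p 4 (Suc 0)) = 0"
      using Q2[of 0 4 0 1] by (simp add: P_def ev_def zeros sp1 sp2 sp3 sps sum_comm)
    have o11: "(\<Sum>p<r. cs p 0 (Suc 0) * cs p 0 (Suc 0)) = 1"
      using Q2[of 0 0 1 1] by (simp add: P_def ev_def zeros sp1 sp2 sp3 sps sum_comm)
    have o12: "(\<Sum>p<r. cs p 0 (Suc 0) * cs p 0 2) = 0"
      using Q2[of 0 0 1 2] by (simp add: P_def ev_def zeros sp1 sp2 sp3 sps sum_comm)
    have o13: "(\<Sum>p<r. cs p 0 (Suc 0) * cs p (Suc 0) 0) = 0"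
      using Q2[of 0 1 1 0] by (simp add: P_def ev_def zeros sp1 sp2 sp3 sps sum_comm)
    have o14: "(\<Sum>p<r. cs p 0 (Suc 0) * cs p (Suc 0) 2) = 0"
      using Q2[of 0 1 1 2] by (simp add: P_def ev_def zeros sp1 sp2 sp3 sps sum_comm)
    have o15: "(\<Sum>p<r. cs p 0 (Suc 0) * cs p 2 (Suc 0)) = 0"
      using Q2[of 0 2 1 1] by (simp add: P_def ev_def zeros sp1 sp2 sp3 sps sum_comm)
    have o16: "(\<Sum>p<r. cs p 0 (Suc 0) * cs p 2 2) = 0"
      using Q2[of 0 2 1 2] by (simp add: P_def ev_def zeros sp1 sp2 sp3 sps sum_comm)
    have o17: "(\<Sum>p<r. cs p 0 (Suc 0) * cs p 3 0) = 0"
      using Q2[of 0 3 1 0] by (simp add: P_def ev_def zeros sp1 sp2 sp3 sps sum_comm)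
    have o18: "(\<Sum>p<r. cs p 0 (Suc 0) * cs p 4 (Suc 0)) = 0"
      using Q2[of 0 4 1 1] by (simp add: P_def ev_def zeros sp1 sp2 sp3 sps sum_comm)
    have o22: "(\<Sum>p<r. cs p 0 2 * cs p 0 2) = 1"
      using Q2[of 0 0 2 2] by (simp add: P_def ev_def zeros sp1 sp2 sp3 sps sum_comm)
    have o23: "(\<Sum>p<r. cs p 0 2 * cs p (Suc 0) 0) = 0"
      using Q2[of 0 1 2 0] by (simp add: P_def ev_def zeros sp1 sp2 sp3 sps sum_comm)
    have o24: "(\<Sum>p<r. cs p 0 2 * cs p (Suc 0) 2) = 0"
      using Q2[of 0 1 2 2] by (simp add: P_def ev_def zeros sp1 sp2 sp3 sps sum_comm)
    have o25: "(\<Sum>p<r. cs p 0 2 * cs p 2 (Suc 0)) = 0"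
      using Q2[of 0 2 2 1] by (simp add: P_def ev_def zeros sp1 sp2 sp3 sps sum_comm)
    have o26: "(\<Sum>p<r. cs p 0 2 * cs p 2 2) = 0"
      using Q2[of 0 2 2 2] by (simp add: P_def ev_def zeros sp1 sp2 sp3 sps sum_comm)
    have o27: "(\<Sum>p<r. cs p 0 2 * cs p 3 0) = 0"
      using Q2[of 0 3 2 0] by (simp add: P_def ev_def zeros sp1 sp2 sp3 sps sum_comm)
    have o28: "(\<Sum>p<r. cs p 0 2 * cs p 4 (Suc 0)) = 0"
      using Q2[of 0 4 2 1] by (simp add: P_def ev_def zeros sp1 sp2 sp3 sps sum_comm)
    have o33: "(\<Sum>p<r. cs p (Suc 0) 0 * cs p (Suc 0) 0) = 1"
      using Q2[of 1 1 0 0] by (simp add: P_def ev_def zeros sp1 sp2 sp3 sps sum_comm)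
    have o34: "(\<Sum>p<r. cs p (Suc 0) 0 * cs p (Suc 0) 2) = 0"
      using Q2[of 1 1 0 2] by (simp add: P_def ev_def zeros sp1 sp2 sp3 sps sum_comm)
    have o35: "(\<Sum>p<r. cs p (Suc 0) 0 * cs p 2 (Suc 0)) = 0"
      using Q2[of 1 2 0 1] by (simp add: P_def ev_def zeros sp1 sp2 sp3 sps sum_comm)
    have o36: "(\<Sum>p<r. cs p (Suc 0) 0 * cs p 2 2) = 0"
      using Q2[of 1 2 0 2] by (simp add: P_def ev_def zeros sp1 sp2 sp3 sps sum_comm)
    have o37: "(\<Sum>p<r. cs p (Suc 0) 0 * cs p 3 0) = 0"
      using Q2[of 1 3 0 0] by (simp add: P_def ev_def zeros sp1 sp2 sp3 sps sum_comm)
    have o38: "(\<Sum>p<r. cs p (Suc 0) 0 * cs p 4 (Suc 0)) = 0"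
      using Q2[of 1 4 0 1] by (simp add: P_def ev_def zeros sp1 sp2 sp3 sps sum_comm)
    have o44: "(\<Sum>p<r. cs p (Suc 0) 2 * cs p (Suc 0) 2) = 1"
      using Q2[of 1 1 2 2] by (simp add: P_def ev_def zeros sp1 sp2 sp3 sps sum_comm)
    have o45: "(\<Sum>p<r. cs p (Suc 0) 2 * cs p 2 (Suc 0)) = 0"
      using Q2[of 1 2 2 1] by (simp add: P_def ev_def zeros sp1 sp2 sp3 sps sum_comm)
    have o46: "(\<Sum>p<r. cs p (Suc 0) 2 * cs p 2 2) = 0"
      using Q2[of 1 2 2 2] by (simp add: P_def ev_def zeros sp1 sp2 sp3 sps sum_comm)
    have o47: "(\<Sum>p<r. cs p (Suc 0) 2 * cs p 3 0) = 0"
      using Q2[of 1 3 2 0] by (simp add: P_def ev_def zeros sp1 sp2 sp3 sps sum_comm)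
    have o48: "(\<Sum>p<r. cs p (Suc 0) 2 * cs p 4 (Suc 0)) = 0"
      using Q2[of 1 4 2 1] by (simp add: P_def ev_def zeros sp1 sp2 sp3 sps sum_comm)
    have o55: "(\<Sum>p<r. cs p 2 (Suc 0) * cs p 2 (Suc 0)) = 1"
      using Q2[of 2 2 1 1] by (simp add: P_def ev_def zeros sp1 sp2 sp3 sps sum_comm)
    have o56: "(\<Sum>p<r. cs p 2 (Suc 0) * cs p 2 2) = 0"
      using Q2[of 2 2 1 2] by (simp add: P_def ev_def zeros sp1 sp2 sp3 sps sum_comm)
    have o57: "(\<Sum>p<r. cs p 2 (Suc 0) * cs p 3 0) = 0"
      using Q2[of 2 3 1 0] by (simp add: P_def ev_def zeros sp1 sp2 sp3 sps sum_comm)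
    have o58: "(\<Sum>p<r. cs p 2 (Suc 0) * cs p 4 (Suc 0)) = 0"
      using Q2[of 2 4 1 1] by (simp add: P_def ev_def zeros sp1 sp2 sp3 sps sum_comm)
    have o66: "(\<Sum>p<r. cs p 2 2 * cs p 2 2) = 1"
      using Q2[of 2 2 2 2] by (simp add: P_def ev_def zeros sp1 sp2 sp3 sps sum_comm)
    have o67: "(\<Sum>p<r. cs p 2 2 * cs p 3 0) = 0"
      using Q2[of 2 3 2 0] by (simp add: P_def ev_def zeros sp1 sp2 sp3 sps sum_comm)
    have o68: "(\<Sum>p<r. cs p 2 2 * cs p 4 (Suc 0)) = 0"
      using Q2[of 2 4 2 1] by (simp add: P_def ev_def zeros sp1 sp2 sp3 sps sum_comm)
    have o77: "(\<Sum>p<r. cs p 3 0 * cs p 3 0) = 1"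
      using Q2[of 3 3 0 0] by (simp add: P_def ev_def zeros sp1 sp2 sp3 sps sum_comm)
    have o78: "(\<Sum>p<r. cs p 3 0 * cs p 4 (Suc 0)) = 0"
      using Q2[of 3 4 0 1] by (simp add: P_def ev_def zeros sp1 sp2 sp3 sps sum_comm)
    have o88: "(\<Sum>p<r. cs p 4 (Suc 0) * cs p 4 (Suc 0)) = 1"
      using Q2[of 4 4 1 1] by (simp add: P_def ev_def zeros sp1 sp2 sp3 sps sum_comm)
    note orthfacts = o00 o01 o02 o03 o04 o05 o06 o07 o08 o11 o12 o13 o14 o15 o16 o17 o18 o22 o23 o24 o25 o26 o27 o28 o33 o34 o35 o36 o37 o38 o44 o45 o46 o47 o48 o55 o56 o57 o58 o66 o67 o68 o77 o78 o88
    define L9 :: "(nat \<times> nat) list" where "L9 = [(0,0),(0,1),(0,2),(1,0),(1,2),(2,1),(2,2),(3,0),(4,1)]"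
    define V where "V k p = cs p (fst (L9 ! k)) (snd (L9 ! k))" for k p
    have orth1: "(\<Sum>p<r. V k p * V k' p) = (if k = k' then 1 else 0)"
      if "k \<le> k'" "k' < 9" for k k'
    proof -
      have hk': "k' = 0 \<or> k' = 1 \<or> k' = 2 \<or> k' = 3 \<or> k' = 4 \<or> k' = 5 \<or> k' = 6 \<or> k' = 7 \<or> k' = 8"
        using that by arith
      have hk: "k = 0 \<or> k = 1 \<or> k = 2 \<or> k = 3 \<or> k = 4 \<or> k = 5 \<or> k = 6 \<or> k = 7 \<or> k = 8"
        using that by arith
      from hk hk' that(1) show ?thesis
        by (elim disjE) (simp_all add: V_def L9_def orthfacts)
    qed
    have orth: "(\<Sum>p<r. V k p * V k' p) = (if k = k' then 1 else 0)"
      if "k < 9" "k' < 9" for k k'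
    proof (cases "k \<le> k'")
      case True then show ?thesis using orth1 that by blast
    next
      case False
      then have "(\<Sum>p<r. V k p * V k' p) = (\<Sum>p<r. V k' p * V k p)" by (simp add: mult.commute)
      then show ?thesis using orth1[of k' k] False that by auto
    qed
    show "9 \<le> r" by (rule bessel[where V=V]) (rule orth)
  qed
  have rank: "sos_rank 5 3 P = 9"
    unfolding sos_rank_def
    by (rule Least_equality) (use s9 lower in auto)
  have bq: "is_biquadratic 5 3 P" by (rule sos_biquad[OF rep9])
  have sos: "is_sos 5 3 P" unfolding is_sos_def using s9 by blast
  have "enat (sos_rank 5 3 P) \<le> BSR 5 3"
    unfolding BSR_def by (rule SUP_upper) (use bq sos in auto)
  then have "BSR 5 3 \<ge> 9" using rank by (simp add: numeral_eq_enat)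
  then show ?thesis using bq sos rank by blast
qed

end
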